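(* Let $q=p^f$ with $p$ prime, $n=q+1$, and let $\mathbf{A}\in\mathrm{GL}_n(q)$ be the matrix defined in the context. Let $\mathcal{C}$ be an $\langle\mathbf{A}\rangle$-irreducible linear $[n,k]_q$ code. Then either $k=2$, or $k=1$, $q$ is even and $\mathcal{C}$ is spanned by the vector $(1,1,\ldots,1)$. If further $\mathcal{C}$ is faithful, then $\langle\mathbf{A}\rangle$ acts regularly on the set of nonzero codewords of $\mathcal{C}$; in particular, $\mathcal{C}$ is an equidistant linear $[n,2]_q$ code of weight $q$.
   Context: A linear $[n,k]_q$ code is a $k$-dimensional subspace of the row space $\mathbb{F}_q^n$; the weight of a vector is its number of nonzero coordinates; a code is equidistant of weight $\omega$ if all nonzero codewords have weight $\omega$. Write the multiplicative group $\mathbb{F}_q^*=\langle\eta,\lambda\rangle$ where $\lambda$ has odd order and $\eta$ has order a power of $2$. Let $\mathbf{D}$ be the $n\times n$ diagonal matrix $\mathrm{diag}(\eta\lambda,\lambda,\eta\lambda,\ldots,\eta\lambda)$ (first entry $\eta\lambda$, second entry $\lambda$, remaining $n-2$ entries $\eta\lambda$), let $\mathbf{P}=\begin{pmatrix}\mathbf{0}' & \mathbf{I}_{n-1}\\ 1 & \mathbf{0}\end{pmatrix}$ (where $\mathbf{0}'$ is the zero column of length $n-1$ and $\mathbf{0}$ the zero row of length $n-1$), and $\mathbf{A}=\mathbf{D}\mathbf{P}$, acting on $\mathbb{F}_q^n$ by right multiplication of row vectors. A code $\mathcal{C}$ is $\langle\mathbf{A}\rangle$-invariant if $\mathbf{u}\mathbf{A}\in\mathcal{C}$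 for all $\mathbf{u}\in\mathcal{C}$; an $\langle\mathbf{A}\rangle$-invariant $[n,k]_q$ code is $\langle\mathbf{A}\rangle$-irreducible if it contains no $\langle\mathbf{A}\rangle$-invariant $[n,k']_q$ code with $1\leqslant k'<k$, and faithful if no nonidentity element of $\langle\mathbf{A}\rangle$ fixes $\mathcal{C}$ pointwise. *)

theory Defs
  imports Complex_Main "HOL-Library.Function_Algebras" "HOL-Library.Cardinality" "HOL-Computational_Algebra.Primes"
begin

text \<open>Row vectors of length n over a field are modelled as functions nat => 'a
  that vanish outside {0..<n}; n x n matrices as functions nat => nat => 'a
  vanishing outside {0..<n} x {0..<n}.\<close>

definition fscale :: "'a::field \<Rightarrow> (nat \<Rightarrow> 'a) \<Rightarrow> (nat \<Rightarrow> 'a)" where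
  "fscale c v = (\<lambda>i. c * v i)"

lemma vector_space_fscale: "vector_space (fscale :: 'a::field \<Rightarrow> _)"
  unfolding vector_space_def fscale_def by (auto simp: fun_eq_iff algebra_simps)

definition Fvecs :: "nat \<Rightarrow> (nat \<Rightarrow> 'a::zero) set" where
  "Fvecs n = {v. \<forall>i\<ge>n. v i = 0}"

definition wt :: "nat \<Rightarrow> (nat \<Rightarrow> 'a::zero) \<Rightarrow> nat" where
  "wt n v = card {i. i < n \<and> v i \<noteq> 0}"

definition code_dim :: "(nat \<Rightarrow> 'a::field) set \<Rightarrow> nat" where
  "code_dim C = vector_space.dim fscale C"

definition linear_code :: "nat \<Rightarrow> nat \<Rightarrow> (nat \<Rightarrow> 'a::field) set \<Rightarrow> bool" where
  "linear_code n k C \<longleftrightarrow> C \<subseteq> Fvecs n \<and> module.subspace fscale C \<and> code_dim C = k"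

definition equidistant :: "nat \<Rightarrow> nat \<Rightarrow> (nat \<Rightarrow> 'a::field) set \<Rightarrow> bool" where
  "equidistant n \<omega> C \<longleftrightarrow> (\<forall>u\<in>C. u \<noteq> 0 \<longrightarrow> wt n u = \<omega>)"

definition mat_mult :: "nat \<Rightarrow> (nat \<Rightarrow> nat \<Rightarrow> 'a::comm_ring_1) \<Rightarrow> (nat \<Rightarrow> nat \<Rightarrow> 'a) \<Rightarrow> (nat \<Rightarrow> nat \<Rightarrow> 'a)" where
  "mat_mult n X Y = (\<lambda>i j. if i < n \<and> j < n then (\<Sum>l<n. X i l * Y l j) else 0)"

definition mat_one :: "nat \<Rightarrow> (nat \<Rightarrow> nat \<Rightarrow> 'a::comm_ring_1)" where
  "mat_one n = (\<lambda>i j. if i < n \<and> j < n \<and> i = j then 1 else 0)"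

fun mat_pow :: "nat \<Rightarrow> (nat \<Rightarrow> nat \<Rightarrow> 'a::comm_ring_1) \<Rightarrow> nat \<Rightarrow> (nat \<Rightarrow> nat \<Rightarrow> 'a)" where
  "mat_pow n X 0 = mat_one n"
| "mat_pow n X (Suc m) = mat_mult n (mat_pow n X m) X"

definition vec_mat :: "nat \<Rightarrow> (nat \<Rightarrow> 'a::comm_ring_1) \<Rightarrow> (nat \<Rightarrow> nat \<Rightarrow> 'a) \<Rightarrow> (nat \<Rightarrow> 'a)" where
  "vec_mat n u X = (\<lambda>j. if j < n then (\<Sum>i<n. u i * X i j) else 0)"

text \<open>D = diag(eta*lambda, lambda, eta*lambda, ..., eta*lambda) (0-indexed: entry 1 is lambda).\<close>
definition matD :: "nat \<Rightarrow> 'a::comm_ring_1 \<Rightarrow> 'a \<Rightarrow> (nat \<Rightarrow> nat \<Rightarrow> 'a)" where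
  "matD n eta lam = (\<lambda>i j. if i < n \<and> j < n \<and> i = j then (if i = 1 then lam else eta * lam) else 0)"

text \<open>P = [[0', I_{n-1}], [1, 0]]: row i has its 1 in column (i+1) mod n.\<close>
definition matP :: "nat \<Rightarrow> (nat \<Rightarrow> nat \<Rightarrow> 'a::comm_ring_1)" where
  "matP n = (\<lambda>i j. if i < n \<and> j < n \<and> j = (i + 1) mod n then 1 else 0)"

definition matA :: "nat \<Rightarrow> 'a::comm_ring_1 \<Rightarrow> 'a \<Rightarrow> (nat \<Rightarrow> nat \<Rightarrow> 'a)" where
  "matA n eta lam = mat_mult n (matD n eta lam) (matP n)"

text \<open>The cyclic group generated by a matrix X (X invertible, finite order, so
  nonnegative powers suffice).\<close>
definition cyc_group :: "nat \<Rightarrow> (nat \<Rightarrow> nat \<Rightarrow> 'a::comm_ring_1) \<Rightarrow> (nat \<Rightarrow> nat \<Rightarrow> 'a) set" where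
  "cyc_group n X = range (mat_pow n X)"

definition invariant :: "nat \<Rightarrow> (nat \<Rightarrow> nat \<Rightarrow> 'a::comm_ring_1) \<Rightarrow> (nat \<Rightarrow> 'a) set \<Rightarrow> bool" where
  "invariant n X C \<longleftrightarrow> (\<forall>u\<in>C. vec_mat n u X \<in> C)"

definition irreducible_code :: "nat \<Rightarrow> (nat \<Rightarrow> nat \<Rightarrow> 'a::field) \<Rightarrow> (nat \<Rightarrow> 'a) set \<Rightarrow> bool" where
  "irreducible_code n X C \<longleftrightarrow> invariant n X C \<and>
     \<not> (\<exists>C' k'. C' \<subseteq> C \<and> linear_code n k' C' \<and> invariant n X C' \<and> 1 \<le> k' \<and> k' < code_dim C)"

definition faithful_code :: "nat \<Rightarrow> (nat \<Rightarrow> nat \<Rightarrow> 'a::field) \<Rightarrow> (nat \<Rightarrow> 'a) set \<Rightarrow> bool" where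
  "faithful_code n X C \<longleftrightarrow>
     (\<forall>g\<in>cyc_group n X. (\<forall>u\<in>C. vec_mat n u g = u) \<longrightarrow> g = mat_one n)"

definition acts_regularly :: "nat \<Rightarrow> (nat \<Rightarrow> nat \<Rightarrow> 'a::comm_ring_1) set \<Rightarrow> (nat \<Rightarrow> 'a) set \<Rightarrow> bool" where
  "acts_regularly n G S \<longleftrightarrow> (\<forall>g\<in>G. \<forall>s\<in>S. vec_mat n s g \<in> S) \<and>
     (\<forall>s\<in>S. \<forall>t\<in>S. \<exists>!g. g \<in> G \<and> vec_mat n s g = t)"

definition mult_ord :: "'a::monoid_mult \<Rightarrow> nat" where
  "mult_ord x = (LEAST m. 0 < m \<and> x ^ m = 1)"

definition ones :: "nat \<Rightarrow> (nat \<Rightarrow> 'a::zero_neq_one)" where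
  "ones n = (\<lambda>i. if i < n then 1 else 0)"

end

theory Submission
  imports Defs "HOL-Computational_Algebra.Polynomial"
begin

interpretation fs: vector_space "fscale :: 'a::field \<Rightarrow> (nat \<Rightarrow> 'a) \<Rightarrow> _"
  by (rule vector_space_fscale)

lemma card_ge2: "CARD('a::{finite,field}) \<ge> 2"
proof -
  have "{0::'a, 1} \<subseteq> UNIV" by simp
  hence "card {0::'a,1} \<le> CARD('a)" by (intro card_mono) auto
  thus ?thesis by simp
qed

lemma pow_card_same:
  fixes x :: "'a::{finite,field}"
  shows "x ^ CARD('a) = x"
proof (cases "x = 0")
  case False
  have "x * (\<Prod>y\<in>UNIV-{0}. x * y) = x * x ^ (card (UNIV :: 'a set) - 1) * \<Prod>(UNIV-{0})"
    by (simp add: prod.distrib mult_ac)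
  also have "x * x ^ (card (UNIV :: 'a set) - 1) = x ^ Suc (card (UNIV :: 'a set) - 1)"
    by (subst power_Suc) auto
  also have "Suc (card (UNIV :: 'a set) - 1) = card (UNIV :: 'a set)"
    using finite_UNIV_card_ge_0[where ?'a = 'a] by simp
  also have "(\<Prod>y\<in>UNIV-{0}. x * y) = (\<Prod>y\<in>UNIV-{0}. y)"
    by (rule prod.reindex_bij_witness[of _ "\<lambda>y. y / x" "\<lambda>y. x * y"]) (use False in auto)
  finally show ?thesis
    by simp
qed (use finite_UNIV_card_ge_0[where ?'a = 'a] in auto)

lemma pow_card1:
  fixes x :: "'a::{finite,field}"
  assumes "x \<noteq> 0" shows "x ^ (CARD('a) - 1) = 1"
proof -
  have "x * x ^ (CARD('a) - 1) = x ^ Suc (CARD('a) - 1)" by (simp only: power_Suc)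
  also have "Suc (CARD('a) - 1) = CARD('a)" using card_ge2[where 'a='a] by simp
  finally have "x * x ^ (CARD('a) - 1) = x * 1" using pow_card_same[of x] by simp
  thus ?thesis using assms by simp
qed

lemma of_nat_card_0: "of_nat CARD('a::{finite,field}) = (0::'a)"
proof -
  have "(\<Sum>y\<in>(UNIV::'a set). 1 + y) = (\<Sum>y\<in>UNIV. y)"
    by (rule sum.reindex_bij_witness[of _ "\<lambda>y. y - 1" "\<lambda>y. 1 + y"]) auto
  thus ?thesis by (simp add: sum.distrib)
qed

lemma CHAR_eq_p:
  assumes "prime p" "CARD('a::{finite,field}) = p ^ f"
  shows "CHAR('a) = p"
proof -
  have pos: "CHAR('a) > 0" by (rule finite_imp_CHAR_pos) simp
  have pr: "prime CHAR('a)" by (rule prime_CHAR_semidom[OF pos])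
  have "CHAR('a) dvd p ^ f" using of_nat_card_0[where 'a='a] assms(2)
    by (metis of_nat_eq_0_iff_char_dvd)
  hence "CHAR('a) dvd p" using pr prime_dvd_power by blast
  thus ?thesis using pr assms(1) primes_dvd_imp_eq by blast
qed

lemma frob_poly:
  fixes P Q :: "'a::{finite,field} poly"
  assumes "prime p" "CARD('a) = p ^ f"
  shows "(P + Q) ^ CARD('a) = P ^ CARD('a) + Q ^ CARD('a)"
proof -
  have c: "CHAR('a poly) = p" using CHAR_eq_p[OF assms] by simp
  show ?thesis
    by (rule freshmans_dream'[where n=f]) (use c assms in auto)
qed

lemma prod_lin_eq:
  "(\<Prod>t\<in>(UNIV::'a::{finite,field} set). [:-t,1:]) = monom 1 CARD('a) - monom 1 1"
proof (rule ccontr)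
  let ?P = "(\<Prod>t\<in>(UNIV::'a set). [:-t,1:])"
  let ?Q = "monom (1::'a) CARD('a) - monom 1 1"
  let ?D = "?P - ?Q"
  assume ne: "?P \<noteq> ?Q"
  hence D0: "?D \<noteq> 0" by simp
  have q2: "CARD('a) \<ge> 2" by (rule card_ge2)
  have degP: "degree ?P = CARD('a)"
    by (subst degree_prod_eq_sum_degree) auto
  have lcP: "lead_coeff ?P = 1" by (simp add: lead_coeff_prod)
  have degQ: "degree ?Q \<le> CARD('a)"
    by (intro degree_diff_le) (auto simp: degree_monom_le intro: order_trans[OF degree_monom_le])
  have "degree ?D \<le> CARD('a)" using degP degQ by (rule_tac degree_diff_le) auto
  moreover have "coeff ?D CARD('a) = 0" using lcP degP q2 by simp
  ultimately have "degree ?D < CARD('a)" using D0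
    by (metis le_neq_implies_less leading_coeff_0_iff)
  moreover have "{x. poly ?D x = 0} = UNIV"
  proof (intro set_eqI iffI)
    fix x :: 'a
    have "(\<Prod>t\<in>(UNIV::'a set). x - t) = 0" by (rule prod_zero) auto
    thus "x \<in> {x. poly ?D x = 0}" using pow_card_same[of x] by (simp add: poly_prod poly_monom)
  qed simp
  ultimately show False using card_poly_roots_bound[OF D0] by simp
qed

lemma mult_ord_basic:
  fixes x :: "'a::{finite,field}"
  assumes "x \<noteq> 0"
  shows "0 < mult_ord x \<and> x ^ mult_ord x = 1"
proof -
  have ex: "0 < CARD('a) - 1 \<and> x ^ (CARD('a) - 1) = 1"
    using pow_card1[OF assms] card_ge2[where 'a='a] by auto
  show ?thesis unfolding mult_ord_def by (rule LeastI[of _ "CARD('a) - 1"]) (rule ex)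
qed

lemma mult_ord_dvd:
  fixes x :: "'a::{finite,field}"
  assumes "x \<noteq> 0"
  shows "x ^ m = 1 \<longleftrightarrow> mult_ord x dvd m"
proof
  assume h: "x ^ m = 1"
  let ?o = "mult_ord x"
  have b: "0 < ?o" "x ^ ?o = 1" using mult_ord_basic[OF assms] by auto
  have "x ^ m = x ^ (?o * (m div ?o) + m mod ?o)" by simp
  also have "\<dots> = (x ^ ?o) ^ (m div ?o) * x ^ (m mod ?o)" by (simp only: power_add power_mult)
  finally have "x ^ m = (x ^ ?o) ^ (m div ?o) * x ^ (m mod ?o)" .
  hence r: "x ^ (m mod ?o) = 1" using h b by simp
  have "m mod ?o = 0"
  proof (rule ccontr)
    assume "m mod ?o \<noteq> 0"
    hence "?o \<le> m mod ?o" unfolding mult_ord_def using r[unfolded mult_ord_def]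
      by (intro Least_le) auto
    moreover have "m mod ?o < ?o" using b by simp
    ultimately show False by simp
  qed
  thus "?o dvd m" by auto
next
  assume "mult_ord x dvd m"
  then obtain k where "m = mult_ord x * k" by auto
  thus "x ^ m = 1" using mult_ord_basic[OF assms] by (simp add: power_mult)
qed

lemma pow_mod_ord:
  fixes x :: "'a::field"
  assumes "x ^ m = 1"
  shows "x ^ a = x ^ (a mod m)"
proof -
  have "x ^ a = x ^ (m * (a div m) + a mod m)" by simp
  also have "\<dots> = (x ^ m) ^ (a div m) * x ^ (a mod m)" by (simp only: power_add power_mult)
  finally have "x ^ a = (x ^ m) ^ (a div m) * x ^ (a mod m)" .
  thus ?thesis using assms by simp
qed

locale S =
  fixes eta lam :: "'a::{finite,field}" and p f n :: nat
  assumes prime_p: "prime p" and card_q: "CARD('a) = p ^ f"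
    and eta0: "eta \<noteq> 0" and lam0: "lam \<noteq> 0" and odd_lam: "odd (mult_ord lam)"
    and eta_ord: "\<exists>e. mult_ord eta = 2 ^ e"
    and gen: "\<forall>x::'a. x \<noteq> 0 \<longrightarrow> (\<exists>a b. x = eta ^ a * lam ^ b)"
    and n_eq: "n = CARD('a) + 1"
begin

definition e :: nat where "e = (SOME e. mult_ord eta = 2 ^ e)"
definition oo :: nat where "oo = mult_ord lam"
definition c :: 'a where "c = lam ^ 2 * eta"

lemma eta_ord': "mult_ord eta = 2 ^ e"
  unfolding e_def using eta_ord by (rule someI_ex)

lemma eta_pow: "eta ^ m = 1 \<longleftrightarrow> 2 ^ e dvd m"
  using mult_ord_dvd[OF eta0] eta_ord' by simp

lemma lam_pow: "lam ^ m = 1 \<longleftrightarrow> oo dvd m"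
  using mult_ord_dvd[OF lam0] oo_def by simp

lemma odd_oo: "odd oo" using odd_lam oo_def by simp

lemma coprime_oo: "coprime oo (2 ^ k)"
  using odd_oo by simp

lemma q2: "CARD('a) \<ge> 2" by (rule card_ge2)

lemma card_units: "CARD('a) - 1 = oo * 2 ^ e"
proof -
  have d1: "oo dvd CARD('a) - 1" using lam_pow pow_card1[OF lam0] by blast
  have d2: "2 ^ e dvd CARD('a) - 1" using eta_pow pow_card1[OF eta0] by blast
  have d: "oo * 2 ^ e dvd CARD('a) - 1"
    using d1 d2 coprime_oo by (simp add: divides_mult)
  have oo0: "oo > 0" using mult_ord_basic[OF lam0] oo_def by simp
  have sub: "UNIV - {0} \<subseteq> (\<lambda>(a,b). eta ^ a * lam ^ b) ` ({..<2^e} \<times> {..<oo})"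
  proof
    fix x :: 'a assume "x \<in> UNIV - {0}"
    then obtain a b where x: "x = eta ^ a * lam ^ b" using gen by auto
    have "eta ^ (2^e) = 1" using eta_pow by simp
    hence "eta ^ a = eta ^ (a mod 2^e)" by (rule pow_mod_ord)
    moreover have "lam ^ oo = 1" using lam_pow by simp
    hence "lam ^ b = lam ^ (b mod oo)" by (rule pow_mod_ord)
    ultimately have "x = eta ^ (a mod 2^e) * lam ^ (b mod oo)" using x by simp
    moreover have "(a mod 2^e, b mod oo) \<in> {..<2^e} \<times> {..<oo}" using oo0 by auto
    ultimately show "x \<in> (\<lambda>(a,b). eta ^ a * lam ^ b) ` ({..<2^e} \<times> {..<oo})"
      by (intro image_eqI[of _ _ "(a mod 2^e, b mod oo)"]) auto
  qed
  have "card (UNIV - {0::'a}) \<le> card ((\<lambda>(a,b). eta ^ a * lam ^ b) ` ({..<2^e} \<times> {..<oo}))"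
    by (rule card_mono[OF _ sub]) auto
  also have "\<dots> \<le> card ({..<(2::nat)^e} \<times> {..<oo})" by (rule card_image_le) auto
  finally have le: "CARD('a) - 1 \<le> oo * 2 ^ e" by (simp add: card_Diff_singleton mult.commute)
  have "oo * 2 ^ e \<le> CARD('a) - 1" using d q2 by (intro dvd_imp_le) auto
  with le show ?thesis by simp
qed

lemma c0: "c \<noteq> 0" unfolding c_def using eta0 lam0 by simp

lemma c_pow_eq: "c ^ r = lam ^ (2 * r) * eta ^ r"
  by (simp add: c_def power_mult_distrib power_mult)

lemma c_pow: assumes "c ^ r = 1" shows "(CARD('a) - 1) dvd r"
proof -
  have "(c ^ r) ^ (2^e) = 1" using assms by simp
  also have "(c ^ r) ^ (2^e) = lam ^ (2 * r * 2^e) * (eta ^ (2^e)) ^ r"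
  proof -
    have "(c ^ r) ^ (2^e) = (lam ^ (2 * r)) ^ (2^e) * (eta ^ r) ^ (2^e)"
      by (simp add: c_pow_eq power_mult_distrib)
    also have "(lam ^ (2 * r)) ^ (2^e) = lam ^ (2 * r * 2^e)" by (simp only: power_mult)
    also have "(eta ^ r) ^ (2^e) = (eta ^ (2^e)) ^ r"
      by (simp only: power_mult[symmetric] mult.commute)
    finally show ?thesis .
  qed
  finally have "lam ^ (2 * r * 2^e) * (eta ^ (2^e)) ^ r = 1" .
  moreover have "eta ^ (2^e) = 1" using eta_pow by simp
  ultimately have "lam ^ (2 * r * 2^e) = 1" by simp
  hence "oo dvd 2 * r * 2 ^ e" using lam_pow by simp
  hence "oo dvd r * 2 ^ (Suc e)" by (simp add: ac_simps)
  hence dr: "oo dvd r" using coprime_oo coprime_dvd_mult_left_iff by blast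
  hence "lam ^ (2 * r) = 1" using lam_pow by simp
  hence "eta ^ r = 1" using assms c_pow_eq[of r] by simp
  hence "2 ^ e dvd r" using eta_pow by simp
  hence "oo * 2 ^ e dvd r" using dr coprime_oo by (simp add: divides_mult)
  thus ?thesis using card_units by simp
qed

lemma c_pow_q1: "c ^ (CARD('a) - 1) = 1" using pow_card1[OF c0] .

lemma square_even:
  assumes "c = mu ^ 2" shows "even CARD('a)"
proof (rule ccontr)
  assume oq: "odd CARD('a)"
  have qe: "CARD('a) = oo * 2^e + 1" using card_units q2 by simp
  have "e \<noteq> 0"
  proof
    assume "e = 0" hence "CARD('a) = oo + 1" using qe by simp
    thus False using oq odd_oo by simp
  qed
  then obtain e' where e': "e = Suc e'" by (cases e) auto
  have mu0: "mu \<noteq> 0" using assms c0 by auto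
  then obtain a b where mu: "mu = eta ^ a * lam ^ b" using gen by auto
  have "mu ^ (2 * oo * 2^e') = eta ^ (a * oo * 2^e) * lam ^ (b * 2 * 2^e' * oo)"
    using e' by (simp add: mu power_mult_distrib power_mult[symmetric] ac_simps)
  also have "lam ^ (b * 2 * 2^e' * oo) = 1" using lam_pow by simp
  also have "eta ^ (a * oo * 2^e) = 1" using eta_pow by simp
  finally have m1: "mu ^ (2 * oo * 2^e') = 1" by simp
  have "mu ^ (2 * oo * 2^e') = c ^ (oo * 2^e')"
    by (simp add: assms power_mult[symmetric] mult.assoc)
  also have "\<dots> = lam ^ (2 * (oo * 2^e')) * eta ^ (oo * 2^e')" by (rule c_pow_eq)
  also have "lam ^ (2 * (oo * 2^e')) = 1" using lam_pow by simp
  finally have "eta ^ (oo * 2^e') = 1" using m1 by simp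
  hence "2 ^ e dvd oo * 2 ^ e'" using eta_pow by simp
  moreover have "coprime ((2::nat) ^ e) oo" using coprime_oo[of e] by (simp add: coprime_commute)
  ultimately have "(2::nat) ^ e dvd 2 ^ e'" using coprime_dvd_mult_right_iff by blast
  hence "(2::nat) ^ e \<le> 2 ^ e'" by (intro dvd_imp_le) auto
  thus False using e' by simp
qed

lemma even_eta: assumes "even CARD('a)" shows "eta = 1"
proof -
  have qe: "CARD('a) = oo * 2^e + 1" using card_units q2 by simp
  have "e = 0"
  proof (rule ccontr)
    assume "e \<noteq> 0" then obtain e' where "e = Suc e'" by (cases e) auto
    hence "CARD('a) = 2 * (oo * 2^e') + 1" using qe by simp
    thus False using assms by simp
  qed
  thus ?thesis using mult_ord_basic[OF eta0] eta_ord' by simp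
qed

lemma even_two: assumes "even CARD('a)" shows "(1::'a) + 1 = 0"
proof -
  have "(-1::'a) ^ CARD('a) = -1" by (rule pow_card_same)
  moreover have "(-1::'a) ^ CARD('a) = 1" using assms by simp
  ultimately have "(1::'a) = -1" by simp
  hence "(1::'a) + 1 = -1 + 1" by simp
  thus ?thesis by simp
qed

end

lemma sum_fun_app: "(sum w I) j = sum (\<lambda>i. w i j) I"
  by (induct I rule: infinite_finite_induct) auto

lemma mod_lt2: "(x::nat) < 2 * m \<Longrightarrow> x mod m = (if x < m then x else x - m)"
  by (simp add: le_mod_geq)

lemma vec_mat_one: "u \<in> Fvecs n \<Longrightarrow> vec_mat n u (mat_one n) = u"
proof (rule ext)
  fix j assume u: "u \<in> Fvecs n"
  show "vec_mat n u (mat_one n) j = u j"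
  proof (cases "j < n")
    case True
    have "(\<Sum>i<n. u i * mat_one n i j) = (\<Sum>i<n. if i = j then u j else 0)"
      by (rule sum.cong) (auto simp: mat_one_def True)
    also have "\<dots> = u j" using True by simp
    finally show ?thesis by (simp add: vec_mat_def True)
  next
    case False thus ?thesis using u by (simp add: vec_mat_def Fvecs_def)
  qed
qed

lemma vec_mat_mult: "vec_mat n u (mat_mult n X Y) = vec_mat n (vec_mat n u X) Y"
proof (rule ext)
  fix j
  show "vec_mat n u (mat_mult n X Y) j = vec_mat n (vec_mat n u X) Y j"
  proof (cases "j < n")
    case True
    have "(\<Sum>i<n. u i * mat_mult n X Y i j) = (\<Sum>i<n. \<Sum>l<n. u i * X i l * Y l j)"
      by (rule sum.cong) (auto simp: mat_mult_def True sum_distrib_left mult.assoc)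
    also have "\<dots> = (\<Sum>l<n. \<Sum>i<n. u i * X i l * Y l j)" by (rule sum.swap)
    also have "\<dots> = (\<Sum>l<n. vec_mat n u X l * Y l j)"
      by (rule sum.cong) (auto simp: vec_mat_def sum_distrib_right)
    finally show ?thesis by (simp add: vec_mat_def True)
  qed (simp add: vec_mat_def)
qed

lemma fscale_in: "u \<in> Fvecs n \<Longrightarrow> fscale a u \<in> Fvecs n"
  by (simp add: Fvecs_def fscale_def)

lemma vec_mat_in: "vec_mat n u X \<in> Fvecs n"
  by (simp add: Fvecs_def vec_mat_def)

lemma mat_pow_out: "\<not> (i < n \<and> j < n) \<Longrightarrow> mat_pow n X m i j = 0"
  by (cases m) (auto simp: mat_one_def mat_mult_def)

lemma mat_eq_by_action:
  assumes "\<And>i j. \<not> (i < n \<and> j < n) \<Longrightarrow> X i j = 0"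
    and "\<And>i j. \<not> (i < n \<and> j < n) \<Longrightarrow> Y i j = 0"
    and "\<And>u. u \<in> Fvecs n \<Longrightarrow> vec_mat n u X = vec_mat n u Y"
  shows "X = Y"
proof (intro ext)
  fix i j
  show "X i j = Y i j"
  proof (cases "i < n \<and> j < n")
    case True
    define ei :: "nat \<Rightarrow> 'a" where "ei = (\<lambda>k. if k = i then 1 else 0)"
    have "ei \<in> Fvecs n" using True by (auto simp: ei_def Fvecs_def)
    hence h: "vec_mat n ei X j = vec_mat n ei Y j" using assms(3) by simp
    have "\<And>Z. vec_mat n ei Z j = Z i j"
    proof -
      fix Z :: "nat \<Rightarrow> nat \<Rightarrow> 'a"
      have "(\<Sum>k<n. ei k * Z k j) = (\<Sum>k<n. if k = i then Z i j else 0)"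
        by (rule sum.cong) (auto simp: ei_def)
      thus "vec_mat n ei Z j = Z i j" using True by (simp add: vec_mat_def)
    qed
    thus ?thesis using h by simp
  qed (use assms in auto)
qed

lemma finite_Fvecs: "finite (Fvecs n :: (nat \<Rightarrow> 'a::{finite,zero}) set)"
proof -
  have "Fvecs n \<subseteq> (\<lambda>xs i. if i < n then xs ! i else 0) ` {xs. set xs \<subseteq> (UNIV::'a set) \<and> length xs = n}"
  proof
    fix v :: "nat \<Rightarrow> 'a" assume v: "v \<in> Fvecs n"
    have "v = (\<lambda>i. if i < n then map v [0..<n] ! i else 0)"
      using v by (auto simp: Fvecs_def)
    thus "v \<in> (\<lambda>xs i. if i < n then xs ! i else 0) ` {xs. set xs \<subseteq> UNIV \<and> length xs = n}"
      by (intro image_eqI[of _ _ "map v [0..<n]"]) auto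
  qed
  moreover have "finite {xs. set xs \<subseteq> (UNIV::'a set) \<and> length xs = n}"
    by (rule finite_lists_length_eq) simp
  ultimately show ?thesis by (rule finite_subset[OF _ finite_imageI])
qed

context S
begin


lemma n_pos: "0 < n" using n_eq by simp
lemma n_q: "n - 1 = CARD('a)" using n_eq by simp
lemma n_ge3: "3 \<le> n" using n_eq q2 by simp

definition d :: "nat \<Rightarrow> 'a" where "d i = (if i = 1 then lam else eta * lam)"

definition L :: "(nat \<Rightarrow> 'a) \<Rightarrow> (nat \<Rightarrow> 'a)" where
  "L u = vec_mat n u (matA n eta lam)"

definition predm :: "nat \<Rightarrow> nat" where "predm j = (j + (n - 1)) mod n"

lemma d0: "d i \<noteq> 0" using eta0 lam0 by (simp add: d_def)

lemma predm_lt: "predm j < n" by (simp add: predm_def n_pos)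

lemma suc_predm: "j < n \<Longrightarrow> (predm j + 1) mod n = j"
  unfolding predm_def using q2 n_eq by (auto simp: mod_lt2)

lemma predm_suc: "i < n \<Longrightarrow> predm (Suc i mod n) = i"
  unfolding predm_def using q2 n_eq by (auto simp: mod_lt2)

lemma L_formula: "L u j = (if j < n then d (predm j) * u (predm j) else 0)"
proof (cases "j < n")
  case True
  have each: "matA n eta lam i j = d i * (if j = (i + 1) mod n then 1 else 0)" if i: "i < n" for i
  proof -
    have "(\<Sum>l<n. matD n eta lam i l * matP n l j)
        = (\<Sum>l<n. if l = i then d i * matP n l j else 0)"
      by (rule sum.cong) (use i in \<open>auto simp: matD_def d_def\<close>)
    also have "\<dots> = d i * matP n i j" using i by simp
    also have "\<dots> = d i * (if j = (i + 1) mod n then 1 else 0)"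
      using i True by (simp add: matP_def)
    finally have X: "(\<Sum>l<n. matD n eta lam i l * matP n l j) = d i * (if j = (i + 1) mod n then 1 else 0)" .
    show ?thesis using i True X by (simp add: matA_def mat_mult_def)
  qed
  have "L u j = (\<Sum>i<n. u i * matA n eta lam i j)" using True by (simp add: L_def vec_mat_def)
  also have "\<dots> = (\<Sum>i<n. u i * (d i * (if j = (i + 1) mod n then 1 else 0)))"
    by (rule sum.cong) (simp_all add: each)
  also have "\<dots> = (\<Sum>i<n. if i = predm j then u (predm j) * d (predm j) else 0)"
  proof (rule sum.cong[OF refl])
    fix i assume i: "i \<in> {..<n}"
    have "j = (i + 1) mod n \<longleftrightarrow> i = predm j"
      using i True suc_predm predm_suc by auto
    thus "u i * (d i * (if j = (i + 1) mod n then 1 else 0))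
        = (if i = predm j then u (predm j) * d (predm j) else 0)" by auto
  qed
  also have "\<dots> = u (predm j) * d (predm j)" using predm_lt by simp
  finally show ?thesis using True by (simp add: mult.commute)
qed (simp add: L_def vec_mat_def)

lemma L_fwd: "i < n \<Longrightarrow> L u ((i + 1) mod n) = d i * u i"
  using predm_suc[of i] by (simp add: L_formula n_pos)

lemma L_in: "L u \<in> Fvecs n" by (simp add: L_def vec_mat_in)

lemma L_add: "L (u + v) = L u + L v"
  by (rule ext) (simp add: L_formula algebra_simps)

lemma L_scale: "L (fscale a u) = fscale a (L u)"
  by (rule ext) (simp add: L_formula fscale_def algebra_simps)

lemma L_zero: "L 0 = 0"
  by (rule ext) (simp add: L_formula)

lemma L_sum: "L (sum w I) = sum (\<lambda>i. L (w i)) I"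
  by (rule ext) (simp add: L_formula sum_fun_app sum_distrib_left)

lemma L_inj0: "u \<in> Fvecs n \<Longrightarrow> L u = 0 \<Longrightarrow> u = 0"
proof (rule ext)
  fix i assume u: "u \<in> Fvecs n" and h: "L u = 0"
  show "u i = 0 i"
  proof (cases "i < n")
    case True
    have "L u ((i + 1) mod n) = d i * u i" using L_fwd[OF True] .
    thus ?thesis using h d0[of i] by simp
  qed (use u in \<open>simp add: Fvecs_def\<close>)
qed

lemma Lp_add: "(L ^^ m) (u + v) = (L ^^ m) u + (L ^^ m) v"
  by (induct m) (simp_all only: funpow.simps comp_apply id_apply L_add)

lemma Lp_scale: "(L ^^ m) (fscale a u) = fscale a ((L ^^ m) u)"
  by (induct m) (simp_all only: funpow.simps comp_apply id_apply L_scale)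

lemma Lp_zero: "(L ^^ m) 0 = 0"
  by (induct m) (simp_all only: funpow.simps comp_apply id_apply L_zero)

lemma Lp_in: "u \<in> Fvecs n \<Longrightarrow> (L ^^ m) u \<in> Fvecs n"
  by (cases m) (auto simp: L_in)

lemma Lp_inj0: "u \<in> Fvecs n \<Longrightarrow> (L ^^ m) u = 0 \<Longrightarrow> u = 0"
proof (induct m arbitrary: u)
  case (Suc m)
  have "L ((L ^^ m) u) = 0" using Suc.prems(2) by (simp only: funpow.simps comp_apply)
  hence "(L ^^ m) u = 0" by (rule L_inj0[OF Lp_in[OF Suc.prems(1)]])
  thus ?case using Suc by blast
qed simp

lemma Lp_comm: "(L ^^ m) (L u) = L ((L ^^ m) u)"
  by (simp add: funpow_swap1)

definition pm :: "nat \<Rightarrow> nat \<Rightarrow> 'a" where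
  "pm i m = (\<Prod>l<m. d ((i + l) mod n))"

lemma pm0: "pm i m \<noteq> 0" by (simp add: pm_def d0)

lemma Lp_fwd: "i < n \<Longrightarrow> (L ^^ m) u ((i + m) mod n) = pm i m * u i"
proof (induct m)
  case 0 thus ?case by (simp add: pm_def)
next
  case (Suc m)
  have k: "(i + m) mod n < n" by (simp add: n_pos)
  have "((i + m) mod n + 1) mod n = (i + Suc m) mod n" by (simp add: mod_Suc_eq)
  hence "(L ^^ Suc m) u ((i + Suc m) mod n) = L ((L ^^ m) u) (((i + m) mod n + 1) mod n)" by simp
  also have "\<dots> = d ((i + m) mod n) * (L ^^ m) u ((i + m) mod n)" by (rule L_fwd[OF k])
  also have "\<dots> = pm i (Suc m) * u i" using Suc by (simp add: pm_def mult.commute mult.left_commute)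
  finally show ?case .
qed

lemma prod_d: "(\<Prod>l<n. d l) = c"
proof -
  have "(\<Prod>l<n. d l) = d 1 * (\<Prod>l\<in>{..<n} - {1}. d l)"
    using q2 n_eq by (subst prod.remove[of _ 1]) auto
  also have "(\<Prod>l\<in>{..<n} - {1}. d l) = (\<Prod>l\<in>{..<n} - {1}. eta * lam)"
    by (rule prod.cong) (auto simp: d_def)
  also have "\<dots> = (eta * lam) ^ CARD('a)" using q2 n_eq by (simp add: card_Diff_singleton)
  also have "(eta * lam) ^ CARD('a) = eta * lam" by (rule pow_card_same)
  finally show ?thesis by (simp add: d_def c_def power2_eq_square mult_ac)
qed

lemma pm_nn: "j < n \<Longrightarrow> pm j n = c"
proof -
  assume j: "j < n"
  have bij: "bij_betw (\<lambda>l. (j + l) mod n) {..<n} {..<n}"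
  proof -
    have inj: "inj_on (\<lambda>l. (j + l) mod n) {..<n}"
    proof (rule inj_onI)
      fix x y assume "x \<in> {..<n}" "y \<in> {..<n}" "(j + x) mod n = (j + y) mod n"
      moreover have "j + x < 2 * n" "j + y < 2 * n" using j \<open>x \<in> {..<n}\<close> \<open>y \<in> {..<n}\<close> by auto
      ultimately show "x = y" using mod_lt2[of "j + x" n] mod_lt2[of "j + y" n] j
        by (auto split: if_splits)
    qed
    have "(\<lambda>l. (j + l) mod n) ` {..<n} = {..<n}"
      by (rule endo_inj_surj[OF _ _ inj]) (auto simp: n_pos)
    thus ?thesis using inj by (simp add: bij_betw_def)
  qed
  show ?thesis unfolding pm_def
    using prod.reindex_bij_betw[OF bij, of d] prod_d by simp
qed

lemma Lp_nn: "u \<in> Fvecs n \<Longrightarrow> (L ^^ n) u = fscale c u"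
proof (rule ext)
  fix j assume u: "u \<in> Fvecs n"
  show "(L ^^ n) u j = fscale c u j"
  proof (cases "j < n")
    case True
    have "(L ^^ n) u ((j + n) mod n) = pm j n * u j" by (rule Lp_fwd[OF True])
    thus ?thesis using True pm_nn[OF True] by (simp add: fscale_def)
  next
    case False
    have "(L ^^ n) u \<in> Fvecs n" by (rule Lp_in[OF u])
    thus ?thesis using False u by (simp add: Fvecs_def fscale_def)
  qed
qed

lemma Lp_nnr: "u \<in> Fvecs n \<Longrightarrow> (L ^^ (n * r)) u = fscale (c ^ r) u"
proof (induct r)
  case 0 thus ?case by (simp add: fscale_def)
next
  case (Suc r)
  have "(L ^^ (n * Suc r)) u = (L ^^ n) ((L ^^ (n * r)) u)"
    by (simp add: funpow_add)
  also have "\<dots> = fscale c (fscale (c ^ r) u)"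
    using Suc Lp_nn[of "fscale (c ^ r) u"] by (simp add: fscale_in)
  finally show ?case by (simp add: fscale_def mult.assoc)
qed

lemma vm_pow: "u \<in> Fvecs n \<Longrightarrow> vec_mat n u (mat_pow n (matA n eta lam) m) = (L ^^ m) u"
proof (induct m)
  case 0 thus ?case by (simp add: vec_mat_one)
next
  case (Suc m)
  thus ?case by (simp add: vec_mat_mult L_def)
qed

end

lemma fscale_sum: "fscale a (sum w I) = sum (\<lambda>i. fscale a (w i)) I"
  by (rule ext) (simp add: fscale_def sum_fun_app sum_distrib_left)

lemma fscale_0: "fscale 0 u = 0" by (rule ext) (simp add: fscale_def)
lemma fscale_1: "fscale 1 u = u" by (rule ext) (simp add: fscale_def)
lemma fscale_add: "fscale (a + b) u = fscale a u + fscale b u"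
  by (rule ext) (simp add: fscale_def algebra_simps)
lemma fscale_diff: "fscale (a - b) u = fscale a u - fscale b u"
  by (rule ext) (simp add: fscale_def algebra_simps)
lemma fscale_mult: "fscale (a * b) u = fscale a (fscale b u)"
  by (rule ext) (simp add: fscale_def algebra_simps)
lemma fscale_radd: "fscale a (u + v) = fscale a u + fscale a v"
  by (rule ext) (simp add: fscale_def algebra_simps)

lemma pcompose_monom1: "pcompose (monom 1 m) Y = Y ^ m"
  by (induct m) (simp_all add: monom_0 monom_Suc pcompose_pCons)

lemma prod_Y:
  fixes Y :: "'a::{finite,field} poly"
  shows "(\<Prod>t\<in>(UNIV::'a set). Y - [:t:]) = Y ^ CARD('a) - Y"
proof -
  have "(\<Prod>t\<in>(UNIV::'a set). Y - [:t:]) = (\<Prod>t\<in>(UNIV::'a set). pcompose [:-t,1:] Y)"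
    by (rule prod.cong) (simp_all add: pcompose_pCons)
  also have "\<dots> = pcompose (\<Prod>t\<in>(UNIV::'a set). [:-t,1:]) Y" by (simp add: pcompose_prod)
  also have "\<dots> = Y ^ CARD('a) - Y"
    by (simp add: prod_lin_eq pcompose_diff pcompose_monom1 del: One_nat_def)
  finally show ?thesis .
qed

context S
begin

lemma L_diff: "L (u - v) = L u - L v"
  by (rule ext) (simp add: L_formula algebra_simps)

definition Phi :: "'a poly \<Rightarrow> (nat \<Rightarrow> 'a) \<Rightarrow> (nat \<Rightarrow> 'a)" where
  "Phi P u = (\<Sum>i<Suc (degree P). fscale (coeff P i) ((L ^^ i) u))"

lemma Phi_N: "degree P < N \<Longrightarrow> Phi P u = (\<Sum>i<N. fscale (coeff P i) ((L ^^ i) u))"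
  unfolding Phi_def
  by (rule sum.mono_neutral_left) (auto simp: coeff_eq_0 fscale_0)

lemma Phi_add: "Phi (P + Q) u = Phi P u + Phi Q u"
proof -
  let ?N = "Suc (max (degree P) (degree Q))"
  have "degree (P + Q) < ?N" using degree_add_le_max[of P Q] by simp
  hence "Phi (P + Q) u = (\<Sum>i<?N. fscale (coeff (P + Q) i) ((L ^^ i) u))" by (rule Phi_N)
  also have "\<dots> = (\<Sum>i<?N. fscale (coeff P i) ((L ^^ i) u)) + (\<Sum>i<?N. fscale (coeff Q i) ((L ^^ i) u))"
    by (simp only: coeff_add fscale_add sum.distrib)
  also have "(\<Sum>i<?N. fscale (coeff P i) ((L ^^ i) u)) = Phi P u" by (rule Phi_N[symmetric]) simp
  also have "(\<Sum>i<?N. fscale (coeff Q i) ((L ^^ i) u)) = Phi Q u" by (rule Phi_N[symmetric]) simp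
  finally show ?thesis .
qed

lemma Phi_diff: "Phi (P - Q) u = Phi P u - Phi Q u"
proof -
  let ?N = "Suc (max (degree P) (degree Q))"
  have "degree (P - Q) < ?N" using degree_diff_le_max[of P Q] by simp
  hence "Phi (P - Q) u = (\<Sum>i<?N. fscale (coeff (P - Q) i) ((L ^^ i) u))" by (rule Phi_N)
  also have "\<dots> = (\<Sum>i<?N. fscale (coeff P i) ((L ^^ i) u)) - (\<Sum>i<?N. fscale (coeff Q i) ((L ^^ i) u))"
    by (simp only: coeff_diff fscale_diff sum_subtractf)
  also have "(\<Sum>i<?N. fscale (coeff P i) ((L ^^ i) u)) = Phi P u" by (rule Phi_N[symmetric]) simp
  also have "(\<Sum>i<?N. fscale (coeff Q i) ((L ^^ i) u)) = Phi Q u" by (rule Phi_N[symmetric]) simp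
  finally show ?thesis .
qed

lemma Phi_smult: "Phi (smult a Q) u = fscale a (Phi Q u)"
proof -
  have "degree (smult a Q) < Suc (degree Q)" using degree_smult_le[of a Q] by simp
  hence "Phi (smult a Q) u = (\<Sum>i<Suc (degree Q). fscale (coeff (smult a Q) i) ((L ^^ i) u))"
    by (rule Phi_N)
  also have "\<dots> = (\<Sum>i<Suc (degree Q). fscale a (fscale (coeff Q i) ((L ^^ i) u)))"
    by (simp only: coeff_smult fscale_mult)
  also have "\<dots> = fscale a (Phi Q u)"
    by (simp only: Phi_def fscale_sum)
  finally show ?thesis .
qed

lemma Phi_pCons: "Phi (pCons a P) w = fscale a w + Phi P (L w)"
proof -
  have "degree (pCons a P) < Suc (Suc (degree P))" using degree_pCons_le[of a P] by simp
  hence "Phi (pCons a P) w = (\<Sum>i<Suc (Suc (degree P)). fscale (coeff (pCons a P) i) ((L ^^ i) w))"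
    by (rule Phi_N)
  also have "\<dots> = fscale a w + (\<Sum>i<Suc (degree P). fscale (coeff P i) ((L ^^ Suc i) w))"
    by (subst sum.lessThan_Suc_shift) simp
  also have "(\<Sum>i<Suc (degree P). fscale (coeff P i) ((L ^^ Suc i) w)) = Phi P (L w)"
    unfolding Phi_def by (simp add: funpow_Suc_right del: funpow.simps)
  finally show ?thesis .
qed

lemma Phi_zero_poly: "Phi 0 u = 0"
  by (simp add: Phi_def fscale_0)

lemma Phi_const: "Phi [:a:] u = fscale a u"
  by (simp add: Phi_def)

lemma Phi_one: "Phi 1 u = u"
  by (simp add: Phi_def fscale_1)

lemma Lp1: "(L ^^ 1) v = L v" by simp

lemma Phi_L: "L (Phi P u) = Phi P (L u)"
  by (simp only: Phi_def L_sum L_scale Lp_comm)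

lemma Phi_mult: "Phi (P * Q) u = Phi P (Phi Q u)"
proof (induct P arbitrary: u rule: pCons_induct)
  case 0 thus ?case by (simp add: Phi_zero_poly)
next
  case (pCons a P)
  have "Phi (pCons a P * Q) u = Phi (smult a Q) u + Phi (pCons 0 (P * Q)) u"
    by (simp add: Phi_add)
  also have "Phi (pCons 0 (P * Q)) u = Phi (P * Q) (L u)"
    by (simp add: Phi_pCons fscale_0)
  also have "\<dots> = Phi P (Phi Q (L u))" by (rule pCons.hyps)
  also have "\<dots> = Phi P (L (Phi Q u))" by (simp add: Phi_L)
  finally show ?case by (simp add: Phi_smult Phi_pCons)
qed

lemma Phi_monom: "Phi (monom 1 m) u = (L ^^ m) u"
proof -
  have "degree (monom (1::'a) m) < Suc m" by (simp add: degree_monom_eq)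
  hence "Phi (monom 1 m) u = (\<Sum>i<Suc m. fscale (coeff (monom 1 m) i) ((L ^^ i) u))"
    by (rule Phi_N)
  also have "\<dots> = (\<Sum>i<Suc m. if i = m then (L ^^ m) u else 0)"
    by (rule sum.cong) (auto simp: fscale_0 fscale_1)
  also have "\<dots> = (L ^^ m) u" by simp
  finally show ?thesis .
qed

lemma Lp_in_C:
  assumes "\<forall>u\<in>C. L u \<in> C" "u \<in> C" shows "(L ^^ m) u \<in> C"
  using assms by (induct m) auto

lemma Phi_in_C:
  assumes "fs.subspace C" "\<forall>u\<in>C. L u \<in> C" "u \<in> C" shows "Phi P u \<in> C"
  unfolding Phi_def
  by (rule fs.subspace_sum[OF assms(1)]) (intro fs.subspace_scale[OF assms(1)] Lp_in_C[OF assms(2,3)])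

definition Yp :: "'a poly" where "Yp = monom 1 1 + monom 1 (CARD('a))"

lemma Yp_pow: "Yp ^ CARD('a) - Yp = monom 1 (CARD('a) * CARD('a)) - monom 1 1"
proof -
  have "Yp ^ CARD('a) = monom 1 1 ^ CARD('a) + monom 1 (CARD('a)) ^ CARD('a)"
    unfolding Yp_def by (rule frob_poly[OF prime_p card_q])
  also have "\<dots> = monom 1 (CARD('a)) + monom 1 (CARD('a) * CARD('a))"
    by (simp add: monom_power)
  finally show ?thesis unfolding Yp_def by simp
qed

lemma Phi_big: "u \<in> Fvecs n \<Longrightarrow> Phi (\<Prod>t\<in>(UNIV::'a set). Yp - [:t:]) u = 0"
proof -
  assume u: "u \<in> Fvecs n"
  obtain k where k: "CARD('a) = Suc k" using q2 by (cases "CARD('a)") auto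
  have e: "CARD('a) * CARD('a) = Suc (n * (CARD('a) - 1))"
    using n_eq k by (simp add: algebra_simps)
  have "(L ^^ (CARD('a) * CARD('a))) u = L ((L ^^ (n * (CARD('a) - 1))) u)"
    by (simp add: e)
  also have "\<dots> = L u" using Lp_nnr[OF u] c_pow_q1 by (simp add: fscale_1)
  finally have "(L ^^ (CARD('a) * CARD('a))) u = L u" .
  thus ?thesis
    by (simp add: prod_Y Yp_pow Phi_diff Phi_monom)
qed

lemma find_factor:
  assumes "finite T" "fs.subspace C" "\<forall>u\<in>C. L u \<in> C" "u \<in> C" "u \<noteq> 0"
    "Phi (\<Prod>t\<in>T. h t) u = 0"
  shows "\<exists>t\<in>T. \<exists>v\<in>C. v \<noteq> 0 \<and> Phi (h t) v = 0"
  using assms(1,6)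
proof (induct T rule: finite_induct)
  case empty thus ?case using assms(5) by (metis Phi_one prod.empty)
next
  case (insert t T)
  have "Phi (h t) (Phi (\<Prod>t\<in>T. h t) u) = 0"
    using insert.prems by (simp only: prod.insert[OF insert.hyps(1,2)] Phi_mult)
  moreover have "Phi (\<Prod>t\<in>T. h t) u \<in> C" by (rule Phi_in_C[OF assms(2,3,4)])
  ultimately show ?case using insert by blast
qed

lemma key:
  assumes "fs.subspace C" "C \<subseteq> Fvecs n" "\<forall>u\<in>C. L u \<in> C" "u \<in> C" "u \<noteq> 0"
  shows "\<exists>v\<in>C. v \<noteq> 0 \<and> (\<exists>t. L (L v) = fscale t (L v) - fscale c v)"
proof -
  have "Phi (\<Prod>t\<in>(UNIV::'a set). Yp - [:t:]) u = 0" using Phi_big assms(2,4) by blast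
  then obtain t v where v: "v \<in> C" "v \<noteq> 0" "Phi (Yp - [:t:]) v = 0"
    using find_factor[OF _ assms(1,3,4,5), of UNIV "\<lambda>t. Yp - [:t:]"] by auto
  have vF: "v \<in> Fvecs n" using v assms(2) by auto
  have "Phi (Yp - [:t:]) v = L v + (L ^^ CARD('a)) v - fscale t v"
    by (simp add: Yp_def Phi_diff Phi_add Phi_monom Phi_const Lp1 del: One_nat_def)
  hence "L (L v + (L ^^ CARD('a)) v - fscale t v) = 0" using v(3) L_zero by simp
  hence "L (L v) + L ((L ^^ CARD('a)) v) - fscale t (L v) = 0"
    by (simp only: L_add L_diff L_scale)
  moreover have "L ((L ^^ CARD('a)) v) = fscale c v"
    using Lp_nn[OF vF] n_eq by simp
  ultimately have "L (L v) = fscale t (L v) - fscale c v"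
    by (simp add: algebra_simps)
  thus ?thesis using v by blast
qed

end

lemma indep_le_dim:
  assumes "finite X" "I \<subseteq> X" "fs.independent I"
  shows "card I \<le> fs.dim X"
proof -
  obtain B where B: "B \<subseteq> X" "fs.independent B" "X \<subseteq> fs.span B" "card B = fs.dim X"
    by (rule fs.basis_exists)
  have "finite B" using B(1) assms(1) finite_subset by blast
  moreover have "I \<subseteq> fs.span B" using assms(2) B(3) by blast
  ultimately have "card I \<le> card B" using fs.independent_span_bound assms(3) by blast
  thus ?thesis using B(4) by simp
qed

lemma dim0_if_zero:
  assumes "X \<subseteq> {0}" shows "fs.dim X = 0"
proof -
  have "X \<subseteq> fs.span {}" using assms by simp
  hence "fs.dim X \<le> card {}" using fs.dim_le_card[of X "{}"] by simp
  thus ?thesis by simp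
qed

lemma dim_ge1:
  assumes "finite X" "v \<in> X" "v \<noteq> 0" shows "1 \<le> fs.dim X"
proof -
  have "fs.independent {v}" using assms(3) by simp
  hence "card {v} \<le> fs.dim X" using assms by (intro indep_le_dim) auto
  thus ?thesis by simp
qed

lemma eq_by_dim:
  assumes "finite X" "fs.subspace Y" "Y \<subseteq> X" "fs.dim X \<le> fs.dim Y"
  shows "Y = X"
proof (rule ccontr)
  assume "Y \<noteq> X"
  then obtain x where x: "x \<in> X" "x \<notin> Y" using assms(3) by blast
  obtain B where B: "B \<subseteq> Y" "fs.independent B" "Y \<subseteq> fs.span B" "card B = fs.dim Y"
    by (rule fs.basis_exists)
  have fB: "finite B" using B(1) assms(1,3) by (meson finite_subset)
  have "fs.span B \<subseteq> Y" using B(1) assms(2) by (rule fs.span_minimal)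
  hence "x \<notin> fs.span B" using x by blast
  hence ind: "fs.independent (insert x B)" using B(2) by (rule fs.independent_insertI)
  have sub: "insert x B \<subseteq> X" using x B(1) assms(3) by blast
  have c1: "card (insert x B) \<le> fs.dim X" by (rule indep_le_dim[OF assms(1) sub ind])
  have xB: "x \<notin> B" using x B(1) by blast
  have "card (insert x B) = Suc (card B)" by (rule card_insert_disjoint[OF fB xB])
  thus False using c1 B(4) assms(4) by linarith
qed

lemma span2: "fs.span {a, b} = {fscale x a + fscale y b | x y. True}"
proof (intro set_eqI iffI)
  fix z assume "z \<in> fs.span {a, b}"
  then obtain x y where "z - fscale x a = fscale y b"
    unfolding fs.span_breakdown_eq fs.span_singleton by blast
  hence "z = fscale x a + fscale y b" by (metis diff_add_cancel add.commute)
  thus "z \<in> {fscale x a + fscale y b | x y. True}" by blast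
next
  fix z assume "z \<in> {fscale x a + fscale y b | x y. True}"
  then obtain x y where z: "z = fscale x a + fscale y b" by blast
  have "z - fscale x a = fscale y b" using z by simp
  thus "z \<in> fs.span {a, b}" unfolding fs.span_breakdown_eq fs.span_singleton by blast
qed

lemma dim_span2: "fs.dim (fs.span {a, b}) \<le> 2"
proof -
  have "fs.dim (fs.span {a, b}) = fs.dim {a, b}" by simp
  also have "\<dots> \<le> card {a, b}" by (rule fs.dim_le_card') simp
  also have "\<dots> \<le> 2" by (simp add: card_insert_if)
  finally show ?thesis .
qed

lemma subspace_Fvecs: "fs.subspace (Fvecs n)"
  unfolding fs.subspace_def by (auto simp: Fvecs_def fscale_def)

locale TT = S +
  fixes C :: "(nat \<Rightarrow> 'a) set" and k :: nat
  assumes lin: "linear_code n k C" and k1: "1 \<le> k"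
    and irr: "irreducible_code n (matA n eta lam) C"
begin

lemma CF: "C \<subseteq> Fvecs n" using lin by (simp add: linear_code_def)
lemma Csub: "fs.subspace C" using lin by (simp add: linear_code_def)
lemma Cdim: "fs.dim C = k" using lin by (simp add: linear_code_def code_dim_def)
lemma Cfin: "finite C" using CF finite_Fvecs finite_subset by blast
lemma invC: "\<forall>u\<in>C. L u \<in> C" using irr by (simp add: irreducible_code_def invariant_def L_def)

lemma irr':
  assumes "C' \<subseteq> C" "fs.subspace C'" "\<forall>u\<in>C'. L u \<in> C'" "1 \<le> fs.dim C'"
  shows "k \<le> fs.dim C'"
proof -
  have "linear_code n (fs.dim C') C'" using assms CF by (auto simp: linear_code_def code_dim_def)
  moreover have "invariant n (matA n eta lam) C'" using assms(3) by (simp add: invariant_def L_def)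
  moreover have "\<not> (\<exists>C' k'. C' \<subseteq> C \<and> linear_code n k' C' \<and> invariant n (matA n eta lam) C' \<and> 1 \<le> k' \<and> k' < code_dim C)"
    using irr by (simp add: irreducible_code_def)
  ultimately have "\<not> fs.dim C' < code_dim C" using assms(1,4) by blast
  thus ?thesis using Cdim by (simp add: code_dim_def)
qed

lemma C_nonzero: obtains u where "u \<in> C" "u \<noteq> 0"
proof -
  have "\<not> C \<subseteq> {0}"
  proof
    assume "C \<subseteq> {0}" hence "fs.dim C = 0" by (rule dim0_if_zero)
    thus False using Cdim k1 by simp
  qed
  thus ?thesis using that by blast
qed

lemma k_le2: "k \<le> 2"
proof -
  obtain u where u: "u \<in> C" "u \<noteq> 0" by (rule C_nonzero)
  obtain v t where v: "v \<in> C" "v \<noteq> 0" "L (L v) = fscale t (L v) - fscale c v"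
    using key[OF Csub CF invC u] by blast
  let ?W = "fs.span {v, L v}"
  have LvC: "L v \<in> C" using invC v by blast
  have WC: "?W \<subseteq> C" using v LvC Csub by (intro fs.span_minimal) auto
  have inv: "\<forall>x\<in>?W. L x \<in> ?W"
  proof
    fix x assume "x \<in> ?W"
    then obtain a b where x: "x = fscale a v + fscale b (L v)" by (auto simp: span2)
    have "L x = fscale a (L v) + fscale b (fscale t (L v) - fscale c v)"
      by (simp add: x L_add L_scale v(3))
    also have "\<dots> \<in> ?W"
      by (intro fs.span_add fs.span_scale fs.span_diff fs.span_base) auto
    finally show "L x \<in> ?W" .
  qed
  have "1 \<le> fs.dim ?W"
    by (rule dim_ge1[of _ v]) (use WC Cfin finite_subset v in \<open>auto intro: fs.span_base\<close>)
  hence "k \<le> fs.dim ?W" using irr'[OF WC fs.subspace_span inv] by simp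
  thus ?thesis using dim_span2[of v "L v"] by simp
qed

lemma Lp_scale_eig: "L u = fscale mu u \<Longrightarrow> (L ^^ m) u = fscale (mu ^ m) u"
proof (induct m)
  case 0 thus ?case by (simp add: fscale_1)
next
  case (Suc m)
  have "(L ^^ Suc m) u = L (fscale (mu ^ m) u)" using Suc by simp
  also have "\<dots> = fscale (mu ^ Suc m) u" using Suc.prems by (simp add: L_scale fscale_mult[symmetric] mult.commute)
  finally show ?case .
qed

lemma fscale_eq_coef:
  assumes "fscale a u = fscale b u" "u \<noteq> 0" shows "a = b"
proof -
  obtain j where "u j \<noteq> 0" using assms(2) by (auto simp: fun_eq_iff)
  moreover have "a * u j = b * u j" using assms(1) by (auto simp: fscale_def fun_eq_iff)
  ultimately show ?thesis by simp
qed

lemma k1_case: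
  assumes "k = 1"
  shows "even CARD('a) \<and> C = fs.span {ones n} \<and> (\<forall>w\<in>C. L w = fscale lam w)"
proof -
  obtain u where u: "u \<in> C" "u \<noteq> 0" by (rule C_nonzero)
  have uF: "u \<in> Fvecs n" using u CF by blast
  have Cu: "fs.span {u} = C"
  proof (rule eq_by_dim[OF Cfin fs.subspace_span])
    show "fs.span {u} \<subseteq> C" using u Csub by (intro fs.span_minimal) auto
    have "fs.independent {u}" using u(2) by simp
    hence "fs.dim (fs.span {u}) = card {u}" by (rule fs.dim_span_eq_card_independent)
    hence "fs.dim (fs.span {u}) = 1" by simp
    thus "fs.dim C \<le> fs.dim (fs.span {u})" using Cdim assms by simp
  qed
  have "L u \<in> fs.span {u}" using invC u Cu by blast
  then obtain mu where mu: "L u = fscale mu u" by (auto simp: fs.span_singleton)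
  have "fscale (mu ^ n) u = (L ^^ n) u" by (rule Lp_scale_eig[OF mu, symmetric])
  also have "\<dots> = fscale c u" by (rule Lp_nn[OF uF])
  finally have "fscale (mu ^ n) u = fscale c u" .
  hence "mu ^ n = c" using u(2) by (rule fscale_eq_coef)
  moreover have "mu ^ n = mu ^ 2"
    using n_eq pow_card_same[of mu] by (simp add: power2_eq_square)
  ultimately have cmu: "c = mu ^ 2" by simp
  hence ev: "even CARD('a)" by (rule square_even)
  have eta1: "eta = 1" using even_eta[OF ev] .
  have two: "(1::'a) + 1 = 0" using even_two[OF ev] .
  have dl: "\<And>i. d i = lam" unfolding d_def using eta1 by simp
  have cl: "c = lam ^ 2" unfolding c_def using eta1 by simp
  have "(mu - lam) * (mu + lam) = 0" using cmu cl by (simp add: algebra_simps power2_eq_square)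
  moreover have "mu + lam = mu - lam"
  proof -
    have "lam + lam = (1 + 1) * lam" by (simp add: algebra_simps)
    hence "lam + lam = 0" using two by simp
    hence lamneg: "lam = - lam" by (simp add: eq_neg_iff_add_eq_0)
    have "mu + lam = mu + (- lam)" using lamneg by (rule arg_cong[where f="\<lambda>x. mu + x"])
    also have "\<dots> = mu - lam" by simp
    finally show ?thesis .
  qed
  ultimately have "(mu - lam) * (mu - lam) = 0" by simp
  hence mul: "mu = lam" by simp
  have step: "u (Suc i) = u i" if "Suc i < n" for i
  proof -
    have "L u ((i + 1) mod n) = d i * u i" using that by (intro L_fwd) simp
    moreover have "(i + 1) mod n = Suc i" using that by simp
    ultimately have "lam * u (Suc i) = lam * u i" using mu mul dl by (simp add: fscale_def)
    thus ?thesis using lam0 by simp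
  qed
  have const: "i < n \<Longrightarrow> u i = u 0" for i
    by (induct i) (use step in auto)
  define a0 where "a0 = u 0"
  have uo: "u = fscale a0 (ones n)"
  proof (rule ext)
    fix j show "u j = fscale a0 (ones n) j"
    proof (cases "j < n")
      case True thus ?thesis using const[OF True] by (simp add: fscale_def ones_def a0_def)
    next
      case False thus ?thesis using uF by (simp add: fscale_def ones_def Fvecs_def)
    qed
  qed
  have u00: "a0 \<noteq> 0"
  proof
    assume "a0 = 0" hence "u = 0" using uo by (simp add: fscale_0)
    thus False using u(2) by simp
  qed
  have o_in: "ones n \<in> fs.span {u}"
  proof -
    have "fscale (inverse a0) u = fscale (inverse a0 * a0) (ones n)"
      unfolding uo by (simp only: fscale_mult)
    also have "\<dots> = ones n" using u00 by (simp add: fscale_1)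
    finally show ?thesis by (metis fs.span_singleton rangeI)
  qed
  have u_in: "u \<in> fs.span {ones n}" unfolding uo fs.span_singleton by (rule rangeI)
  have "fs.span {u} = fs.span {ones n}"
    unfolding fs.span_eq using o_in u_in by simp
  moreover have "\<forall>w\<in>C. L w = fscale lam w"
  proof
    fix w assume "w \<in> C"
    then obtain a where "w = fscale a u" using Cu by (auto simp: fs.span_singleton)
    thus "L w = fscale lam w" using mu mul by (simp add: L_scale fscale_mult[symmetric] mult.commute)
  qed
  ultimately show ?thesis using ev Cu by simp
qed

end

context S
begin

lemma Lp_split: "(L ^^ (a + b)) u = (L ^^ a) ((L ^^ b) u)"
  by (simp add: funpow_add)

lemma Lp_fix: "mat_pow n (matA n eta lam) j = mat_one n \<Longrightarrow> v \<in> Fvecs n \<Longrightarrow> (L ^^ j) v = v"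
  using vm_pow[of v j] vec_mat_one[of v n] by simp

lemma mat_pow_eqI:
  assumes "\<And>v. v \<in> Fvecs n \<Longrightarrow> (L ^^ m1) v = (L ^^ m2) v"
  shows "mat_pow n (matA n eta lam) m1 = mat_pow n (matA n eta lam) m2"
  by (rule mat_eq_by_action[where n=n]) (auto simp: mat_pow_out vm_pow assms)

lemma OL:
  assumes "mat_pow n (matA n eta lam) j = mat_one n"
  shows "n * (CARD('a) - 1) dvd j"
proof -
  define e0 :: "nat \<Rightarrow> 'a" where "e0 = (\<lambda>k. if k = 0 then 1 else 0)"
  have e0F: "e0 \<in> Fvecs n" using n_pos by (auto simp: e0_def Fvecs_def)
  have fx: "(L ^^ j) e0 = e0" by (rule Lp_fix[OF assms e0F])
  have "(L ^^ j) e0 ((0 + j) mod n) = pm 0 j * e0 0" by (rule Lp_fwd) (simp add: n_pos)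
  hence "e0 (j mod n) = pm 0 j" using fx by (simp add: e0_def)
  hence "e0 (j mod n) \<noteq> 0" using pm0 by simp
  hence jm: "j mod n = 0" by (simp add: e0_def split: if_splits)
  then obtain r where r: "j = n * r" by auto
  have "fscale (c ^ r) e0 = e0" using Lp_nnr[OF e0F, of r] fx r by simp
  hence "c ^ r * e0 0 = e0 0" by (metis fscale_def)
  hence "c ^ r = 1" by (simp add: e0_def)
  hence "(CARD('a) - 1) dvd r" by (rule c_pow)
  thus ?thesis using r by simp
qed

end

locale TF = TT +
  assumes faith: "faithful_code n (matA n eta lam) C"
begin

lemma faith': "(\<And>w. w \<in> C \<Longrightarrow> (L ^^ j) w = w) \<Longrightarrow> mat_pow n (matA n eta lam) j = mat_one n"
proof -
  assume h: "\<And>w. w \<in> C \<Longrightarrow> (L ^^ j) w = w"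
  have "mat_pow n (matA n eta lam) j \<in> cyc_group n (matA n eta lam)" by (simp add: cyc_group_def)
  moreover have "\<forall>u\<in>C. vec_mat n u (mat_pow n (matA n eta lam) j) = u"
    using h vm_pow CF by auto
  ultimately show ?thesis using faith by (simp add: faithful_code_def)
qed

lemma k_eq2: "k = 2"
proof (rule ccontr)
  assume "k \<noteq> 2"
  hence k1: "k = 1" using k_le2 k1 by simp
  have Lw: "\<forall>w\<in>C. L w = fscale lam w" using k1_case[OF k1] by blast
  have "(L ^^ (CARD('a) - 1)) w = w" if "w \<in> C" for w
    using Lp_scale_eig[of w lam "CARD('a) - 1"] Lw that pow_card1[OF lam0] by (simp add: fscale_1)
  hence "mat_pow n (matA n eta lam) (CARD('a) - 1) = mat_one n" by (rule faith')
  hence "n * (CARD('a) - 1) dvd (CARD('a) - 1)" by (rule OL)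
  moreover have "0 < CARD('a) - 1" using q2 by simp
  ultimately have "n * (CARD('a) - 1) \<le> 1 * (CARD('a) - 1)" by (simp add: dvd_imp_le)
  hence "n \<le> 1" using \<open>0 < CARD('a) - 1\<close> by simp
  thus False using n_ge3 by simp
qed

lemma notin_span1:
  assumes "s \<in> C" "s \<noteq> 0" shows "L s \<notin> fs.span {s}"
proof
  assume "L s \<in> fs.span {s}"
  hence "L s \<in> range (\<lambda>k. fscale k s)" by (simp only: fs.span_singleton)
  then obtain mu where mu: "L s = fscale mu s" by blast
  have sub: "fs.span {s} \<subseteq> C" by (rule fs.span_minimal) (use assms Csub in auto)
  have inv: "\<forall>u\<in>fs.span {s}. L u \<in> fs.span {s}"
  proof
    fix u assume "u \<in> fs.span {s}"
    hence "u \<in> range (\<lambda>k. fscale k s)" by (simp only: fs.span_singleton)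
    then obtain a where ua: "u = fscale a s" by blast
    have "L u = fscale (a * mu) s" unfolding ua L_scale mu fscale_mult ..
    hence "L u \<in> range (\<lambda>k. fscale k s)" by blast
    thus "L u \<in> fs.span {s}" by (simp only: fs.span_singleton)
  qed
  have ind: "fs.independent {s}" using assms(2) by simp
  have d1: "fs.dim (fs.span {s}) = card {s}" by (rule fs.dim_span_eq_card_independent[OF ind])
  have d1': "fs.dim (fs.span {s}) = 1" using d1 by simp
  have "k \<le> fs.dim (fs.span {s})" by (rule irr'[OF sub fs.subspace_span inv]) (use d1' in linarith)
  thus False using d1' k_eq2 by simp
qed

lemma indep2:
  assumes "s \<in> C" "s \<noteq> 0" "fscale a s + fscale b (L s) = 0"
  shows "a = 0 \<and> b = 0"
proof (cases "b = 0")
  case True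
  hence "fscale a s = fscale 0 s" using assms(3) by (simp add: fscale_0)
  hence "a = 0" using assms(2) by (rule fscale_eq_coef)
  thus ?thesis using True by simp
next
  case False
  have pt: "a * s j + b * L s j = 0" for j
  proof -
    have "(fscale a s + fscale b (L s)) j = (0::nat \<Rightarrow> 'a) j" using assms(3) by (rule arg_cong)
    thus ?thesis by (simp add: fscale_def)
  qed
  have "L s = fscale (- a / b) s"
  proof (rule ext)
    fix j
    have "b * L s j = - (a * s j)" using pt[of j] by (simp add: eq_neg_iff_add_eq_0 add.commute)
    hence "L s j = - (a * s j) / b" using False by (simp add: field_simps)
    thus "L s j = fscale (- a / b) s j" by (simp add: fscale_def)
  qed
  hence "L s \<in> range (\<lambda>k. fscale k s)" by (metis rangeI)
  hence "L s \<in> fs.span {s}" by (simp only: fs.span_singleton)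
  thus ?thesis using notin_span1 assms by blast
qed

lemma Cspan:
  assumes "s \<in> C" "s \<noteq> 0" shows "C = fs.span {s, L s}"
proof -
  have LsC: "L s \<in> C" using invC assms by blast
  have sub: "fs.span {s, L s} \<subseteq> C" using assms LsC Csub by (intro fs.span_minimal) auto
  have ni: "L s \<notin> fs.span {s}" by (rule notin_span1[OF assms])
  have ind: "fs.independent (insert (L s) {s})"
    by (rule fs.independent_insertI[OF ni]) (simp add: assms(2))
  have neq: "L s \<noteq> s" using ni fs.span_base[of s "{s}"] by auto
  have "card (insert (L s) {s}) \<le> fs.dim (fs.span {s, L s})"
    by (rule indep_le_dim[OF finite_subset[OF sub Cfin] _ ind]) (auto intro: fs.span_base)
  hence "2 \<le> fs.dim (fs.span {s, L s})" using neq by simp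
  hence "fs.dim C \<le> fs.dim (fs.span {s, L s})" using Cdim k_eq2 by simp
  thus ?thesis using eq_by_dim[OF Cfin fs.subspace_span sub] by simp
qed

lemma C_repr:
  assumes "s \<in> C" "s \<noteq> 0" "w \<in> C" obtains a b where "w = fscale a s + fscale b (L s)"
proof -
  have "w \<in> fs.span {s, L s}" using Cspan[OF assms(1,2)] assms(3) by simp
  hence "w \<in> {fscale x s + fscale y (L s) | x y. True}" by (simp only: span2)
  thus ?thesis using that by blast
qed

lemma ST:
  assumes "s \<in> C" "s \<noteq> 0" "(L ^^ j) s = s"
  shows "mat_pow n (matA n eta lam) j = mat_one n"
proof (rule faith')
  fix w assume "w \<in> C"
  then obtain a b where w: "w = fscale a s + fscale b (L s)" using C_repr assms(1,2) by blast
  have "(L ^^ j) (L s) = L s" using assms(3) by (simp add: Lp_comm)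
  thus "(L ^^ j) w = w" using assms(3) by (simp add: w Lp_add Lp_scale)
qed

lemma card_C: "card C = CARD('a) * CARD('a)"
proof -
  obtain s where s: "s \<in> C" "s \<noteq> 0" by (rule C_nonzero)
  have "C = {fscale x s + fscale y (L s) | x y. True}"
    by (subst Cspan[OF s]) (rule span2)
  also have "\<dots> = (\<lambda>(a, b). fscale a s + fscale b (L s)) ` UNIV" by auto
  finally have "C = (\<lambda>(a, b). fscale a s + fscale b (L s)) ` UNIV" .
  moreover have "inj (\<lambda>(a, b). fscale a s + fscale b (L s))"
  proof (rule injI, clarify)
    fix a b a' b' assume h: "fscale a s + fscale b (L s) = fscale a' s + fscale b' (L s)"
    have "fscale (a - a') s + fscale (b - b') (L s) = 0"
      using h by (simp add: fscale_diff algebra_simps)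
    thus "a = a' \<and> b = b'" using indep2[OF s] by fastforce
  qed
  ultimately have "card C = card (UNIV :: ('a \<times> 'a) set)" by (simp add: card_image)
  thus ?thesis by (simp only: card_prod)
qed

lemma NN: "CARD('a) * CARD('a) - 1 = n * (CARD('a) - 1)"
proof -
  obtain k where k: "CARD('a) = Suc k" using q2 by (cases "CARD('a)") auto
  show ?thesis using n_eq k by (simp add: algebra_simps)
qed

lemma same_pow:
  assumes "s \<in> C" "s \<noteq> 0" "(L ^^ m1) s = (L ^^ m2) s" "m1 \<le> m2"
  shows "mat_pow n (matA n eta lam) m1 = mat_pow n (matA n eta lam) m2"
proof -
  have sF: "s \<in> Fvecs n" using assms CF by blast
  have wC: "(L ^^ m1) s \<in> C" using Lp_in_C[OF invC assms(1)] .
  have w0: "(L ^^ m1) s \<noteq> 0" using Lp_inj0[OF sF] assms(2) by blast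
  have "(L ^^ (m2 - m1)) ((L ^^ m1) s) = (L ^^ (m2 - m1 + m1)) s" by (rule Lp_split[symmetric])
  also have "m2 - m1 + m1 = m2" using assms(4) by simp
  finally have "(L ^^ (m2 - m1)) ((L ^^ m1) s) = (L ^^ m2) s" .
  hence "(L ^^ (m2 - m1)) ((L ^^ m1) s) = (L ^^ m1) s" using assms(3) by simp
  hence I: "mat_pow n (matA n eta lam) (m2 - m1) = mat_one n" by (rule ST[OF wC w0])
  show ?thesis
  proof (rule mat_pow_eqI)
    fix v :: "nat \<Rightarrow> 'a" assume vF: "v \<in> Fvecs n"
    have "(L ^^ m2) v = (L ^^ (m1 + (m2 - m1))) v" using assms(4) by simp
    also have "\<dots> = (L ^^ m1) ((L ^^ (m2 - m1)) v)" by (rule Lp_split)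
    finally have "(L ^^ m2) v = (L ^^ m1) ((L ^^ (m2 - m1)) v)" .
    also have "\<dots> = (L ^^ m1) v" using Lp_fix[OF I vF] by simp
    finally show "(L ^^ m1) v = (L ^^ m2) v" by simp
  qed
qed

lemma orbit:
  assumes "s \<in> C" "s \<noteq> 0"
  shows "(\<lambda>m. (L ^^ m) s) ` {..<n * (CARD('a) - 1)} = C - {0}"
proof (rule card_subset_eq)
  have sF: "s \<in> Fvecs n" using assms CF by blast
  show "finite (C - {0})" using Cfin by simp
  show "(\<lambda>m. (L ^^ m) s) ` {..<n * (CARD('a) - 1)} \<subseteq> C - {0}"
  proof (rule image_subsetI)
    fix m
    have "(L ^^ m) s \<in> C" by (rule Lp_in_C[OF invC assms(1)])
    moreover have "(L ^^ m) s \<noteq> 0"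
    proof
      assume "(L ^^ m) s = 0" hence "s = 0" by (rule Lp_inj0[OF sF])
      thus False using assms(2) by simp
    qed
    ultimately show "(L ^^ m) s \<in> C - {0}" by simp
  qed
  have nz: "(L ^^ m) s \<noteq> 0" for m
  proof
    assume "(L ^^ m) s = 0" hence "s = 0" by (rule Lp_inj0[OF sF])
    thus False using assms(2) by simp
  qed
  have "inj_on (\<lambda>m. (L ^^ m) s) {..<n * (CARD('a) - 1)}"
  proof (rule inj_onI)
    fix x y assume x: "x \<in> {..<n * (CARD('a) - 1)}" and y: "y \<in> {..<n * (CARD('a) - 1)}"
      and e: "(L ^^ x) s = (L ^^ y) s"
    show "x = y"
    proof (rule ccontr)
      assume "x \<noteq> y"
      then consider "x < y" | "y < x" by linarith
      thus False
      proof cases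
        case 1
        have "(L ^^ (y - x)) ((L ^^ x) s) = (L ^^ (y - x + x)) s" by (rule Lp_split[symmetric])
        also have "y - x + x = y" using 1 by simp
        finally have "(L ^^ (y - x)) ((L ^^ x) s) = (L ^^ x) s" using e by simp
        hence "mat_pow n (matA n eta lam) (y - x) = mat_one n"
          by (rule ST[OF Lp_in_C[OF invC assms(1)] nz])
        hence "n * (CARD('a) - 1) dvd (y - x)" by (rule OL)
        moreover have "0 < y - x" "y - x < n * (CARD('a) - 1)" using 1 y by auto
        ultimately show False using dvd_imp_le by fastforce
      next
        case 2
        have "(L ^^ (x - y)) ((L ^^ y) s) = (L ^^ (x - y + y)) s" by (rule Lp_split[symmetric])
        also have "x - y + y = x" using 2 by simp
        finally have "(L ^^ (x - y)) ((L ^^ y) s) = (L ^^ y) s" using e by simp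
        hence "mat_pow n (matA n eta lam) (x - y) = mat_one n"
          by (rule ST[OF Lp_in_C[OF invC assms(1)] nz])
        hence "n * (CARD('a) - 1) dvd (x - y)" by (rule OL)
        moreover have "0 < x - y" "x - y < n * (CARD('a) - 1)" using 2 x by auto
        ultimately show False using dvd_imp_le by fastforce
      qed
    qed
  qed
  hence "card ((\<lambda>m. (L ^^ m) s) ` {..<n * (CARD('a) - 1)}) = n * (CARD('a) - 1)"
    by (simp add: card_image)
  also have "\<dots> = card (C - {0})"
  proof -
    have "0 \<in> C" by (rule fs.subspace_0[OF Csub])
    hence "card (C - {0}) = card C - 1" using Cfin by (simp add: card_Diff_singleton)
    thus ?thesis using card_C NN by simp
  qed
  finally show "card ((\<lambda>m. (L ^^ m) s) ` {..<n * (CARD('a) - 1)}) = card (C - {0})" .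
qed

lemma orbit_mem:
  assumes "s \<in> C - {0}" "t \<in> C - {0}" obtains m where "t = (L ^^ m) s"
proof -
  have "t \<in> (\<lambda>m. (L ^^ m) s) ` {..<n * (CARD('a) - 1)}" using orbit[of s] assms by simp
  then obtain m where "t = (L ^^ m) s" by blast
  thus ?thesis using that by blast
qed

lemma regular: "acts_regularly n (cyc_group n (matA n eta lam)) (C - {0})"
  unfolding acts_regularly_def
proof (intro conjI ballI)
  fix g s assume g: "g \<in> cyc_group n (matA n eta lam)" and s: "s \<in> C - {0}"
  then obtain m where gm: "g = mat_pow n (matA n eta lam) m" unfolding cyc_group_def by blast
  have sF: "s \<in> Fvecs n" using s CF by blast
  have "(L ^^ m) s \<in> C" using s by (intro Lp_in_C[OF invC]) simp
  moreover have "(L ^^ m) s \<noteq> 0"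
  proof
    assume "(L ^^ m) s = 0" hence "s = 0" by (rule Lp_inj0[OF sF])
    thus False using s by simp
  qed
  ultimately show "vec_mat n s g \<in> C - {0}" using gm vm_pow[OF sF] by simp
next
  fix s t assume s: "s \<in> C - {0}" and t: "t \<in> C - {0}"
  have sF: "s \<in> Fvecs n" using s CF by blast
  obtain m where m: "t = (L ^^ m) s" by (rule orbit_mem[OF s t])
  show "\<exists>!g. g \<in> cyc_group n (matA n eta lam) \<and> vec_mat n s g = t"
  proof (rule ex1I[of _ "mat_pow n (matA n eta lam) m"])
    show "mat_pow n (matA n eta lam) m \<in> cyc_group n (matA n eta lam) \<and>
        vec_mat n s (mat_pow n (matA n eta lam) m) = t"
      using m vm_pow[OF sF] by (simp add: cyc_group_def)
  next
    fix g assume "g \<in> cyc_group n (matA n eta lam) \<and> vec_mat n s g = t"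
    then obtain m' where g: "g = mat_pow n (matA n eta lam) m'" "vec_mat n s g = t"
      unfolding cyc_group_def by blast
    have eq: "(L ^^ m') s = (L ^^ m) s" using g m vm_pow[OF sF] by simp
    have s1: "s \<in> C" "s \<noteq> 0" using s by auto
    have "mat_pow n (matA n eta lam) m' = mat_pow n (matA n eta lam) m"
    proof (cases "m' \<le> m")
      case True thus ?thesis using same_pow[OF s1, of m' m] eq by simp
    next
      case False thus ?thesis using same_pow[OF s1, of m m'] eq by simp
    qed
    thus "g = mat_pow n (matA n eta lam) m" using g(1) by simp
  qed
qed

end

context TF
begin

lemma wt_L:
  assumes uF: "u \<in> Fvecs n" shows "wt n (L u) = wt n u"
proof -
  have eq: "{j. j < n \<and> L u j \<noteq> 0} = (\<lambda>i. Suc i mod n) ` {i. i < n \<and> u i \<noteq> 0}"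
  proof (intro set_eqI iffI)
    fix j assume "j \<in> {j. j < n \<and> L u j \<noteq> 0}"
    hence j: "j < n" "L u j \<noteq> 0" by auto
    hence "u (predm j) \<noteq> 0" by (simp add: L_formula)
    moreover have "j = Suc (predm j) mod n" using suc_predm[OF j(1)] by simp
    ultimately show "j \<in> (\<lambda>i. Suc i mod n) ` {i. i < n \<and> u i \<noteq> 0}"
      using predm_lt by blast
  next
    fix j assume "j \<in> (\<lambda>i. Suc i mod n) ` {i. i < n \<and> u i \<noteq> 0}"
    then obtain i where i: "i < n" "u i \<noteq> 0" "j = Suc i mod n" by blast
    have "L u ((i + 1) mod n) = d i * u i" by (rule L_fwd[OF i(1)])
    hence "L u j \<noteq> 0" using i d0[of i] by simp
    moreover have "j < n" using i n_pos by simp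
    ultimately show "j \<in> {j. j < n \<and> L u j \<noteq> 0}" by simp
  qed
  have inj: "inj_on (\<lambda>i. Suc i mod n) {i. i < n \<and> u i \<noteq> 0}"
    by (rule inj_on_inverseI[where g=predm]) (simp add: predm_suc)
  show ?thesis unfolding wt_def eq by (rule card_image[OF inj])
qed

lemma wt_Lp: "u \<in> Fvecs n \<Longrightarrow> wt n ((L ^^ m) u) = wt n u"
proof (induct m)
  case (Suc m)
  have "wt n ((L ^^ Suc m) u) = wt n (L ((L ^^ m) u))" by simp
  also have "\<dots> = wt n ((L ^^ m) u)" by (rule wt_L[OF Lp_in[OF Suc.prems]])
  finally show ?case using Suc by simp
qed simp

lemma vanish:
  assumes j: "j < n" and h: "\<forall>x\<in>C. x j = 0" and x: "x \<in> C"
  shows "x = 0"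
proof (rule ext)
  fix i
  have xF: "x \<in> Fvecs n" using x CF by blast
  show "x i = 0 i"
  proof (cases "i < n")
    case True
    have "(L ^^ (j + n - i)) x ((i + (j + n - i)) mod n) = pm i (j + n - i) * x i"
      by (rule Lp_fwd[OF True])
    moreover have "(i + (j + n - i)) mod n = j" using True j by simp
    moreover have "(L ^^ (j + n - i)) x \<in> C" by (rule Lp_in_C[OF invC x])
    hence "(L ^^ (j + n - i)) x j = 0" using h by blast
    ultimately have "pm i (j + n - i) * x i = 0" by simp
    thus ?thesis using pm0 by simp
  next
    case False thus ?thesis using xF by (simp add: Fvecs_def)
  qed
qed

lemma Lp_mult_eig:
  assumes "(L ^^ j) w = fscale mu w"
  shows "(L ^^ (j * r)) w = fscale (mu ^ r) w"
proof (induct r)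
  case 0 thus ?case by (simp add: fscale_1)
next
  case (Suc r)
  have e: "j * Suc r = j * r + j" by (rule trans[OF mult_Suc_right add.commute])
  have "(L ^^ (j * Suc r)) w = (L ^^ (j * r + j)) w" unfolding e ..
  also have "\<dots> = (L ^^ (j * r)) ((L ^^ j) w)" by (rule Lp_split)
  also have "\<dots> = fscale mu ((L ^^ (j * r)) w)" unfolding assms by (rule Lp_scale)
  also have "\<dots> = fscale mu (fscale (mu ^ r) w)" by (simp only: Suc.hyps)
  also have "\<dots> = fscale (mu * mu ^ r) w" by (rule fscale_mult[symmetric])
  also have "\<dots> = fscale (mu ^ Suc r) w" by simp
  finally show ?case .
qed

lemma exists_w0: obtains w where "w \<in> C" "w \<noteq> 0" "w 0 = 0"
proof -
  obtain s where s: "s \<in> C" "s \<noteq> 0" by (rule C_nonzero)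
  show ?thesis
  proof (cases "s 0 = 0")
    case True thus ?thesis using that s by blast
  next
    case False
    define w where "w = fscale (L s 0) s + fscale (- s 0) (L s)"
    have "w \<in> C" unfolding w_def
      by (intro fs.subspace_add[OF Csub] fs.subspace_scale[OF Csub] s) (use invC s in blast)
    moreover have "w \<noteq> 0"
    proof
      assume "w = 0"
      hence "L s 0 = 0 \<and> - s 0 = 0" using indep2[OF s] unfolding w_def by blast
      thus False using False by simp
    qed
    moreover have "w 0 = 0" by (simp add: w_def fscale_def)
    ultimately show ?thesis using that by blast
  qed
qed

lemma w_nonzero:
  assumes w: "w \<in> C" "w \<noteq> 0" "w 0 = 0" and j: "0 < j" "j < n"
  shows "w j \<noteq> 0"
proof
  assume wj: "w j = 0"
  have wF: "w \<in> Fvecs n" using w CF by blast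
  define v where "v = (L ^^ j) w"
  have vC: "v \<in> C" unfolding v_def by (rule Lp_in_C[OF invC w(1)])
  have v0: "v \<noteq> 0"
  proof
    assume "v = 0" hence "w = 0" unfolding v_def by (rule Lp_inj0[OF wF])
    thus False using w by simp
  qed
  have vj: "v j = 0"
  proof -
    have "(L ^^ j) w ((0 + j) mod n) = pm 0 j * w 0" by (rule Lp_fwd) (simp add: n_pos)
    thus ?thesis using j w(3) by (simp add: v_def)
  qed
  show False
  proof (cases "v \<in> fs.span {w}")
    case True
    hence "v \<in> range (\<lambda>k. fscale k w)" by (simp only: fs.span_singleton)
    then obtain mu where mu: "v = fscale mu w" by blast
    have mu0: "mu \<noteq> 0" using mu v0 by (auto simp: fscale_0)
    have "(L ^^ (j * (CARD('a) - 1))) w = fscale (mu ^ (CARD('a) - 1)) w"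
      by (rule Lp_mult_eig) (simp add: mu[unfolded v_def])
    also have "\<dots> = w" using pow_card1[OF mu0] by (simp add: fscale_1)
    finally have "mat_pow n (matA n eta lam) (j * (CARD('a) - 1)) = mat_one n"
      by (rule ST[OF w(1,2)])
    hence "n * (CARD('a) - 1) dvd j * (CARD('a) - 1)" by (rule OL)
    moreover have "0 < CARD('a) - 1" using q2 by simp
    ultimately have "n dvd j" by simp
    thus False using j by (auto dest: dvd_imp_le)
  next
    case False
    have ind: "fs.independent (insert v {w})"
      by (rule fs.independent_insertI[OF False]) (simp add: w(2))
    have sub: "fs.span {v, w} \<subseteq> C" by (rule fs.span_minimal) (use vC w Csub in auto)
    have neq: "v \<noteq> w" using False fs.span_base[of w "{w}"] by auto
    have "card (insert v {w}) \<le> fs.dim (fs.span {v, w})"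
      by (rule indep_le_dim[OF finite_subset[OF sub Cfin] _ ind]) (auto intro: fs.span_base)
    hence "2 \<le> fs.dim (fs.span {v, w})" using neq by simp
    hence "fs.dim C \<le> fs.dim (fs.span {v, w})" using Cdim k_eq2 by simp
    hence CE: "fs.span {v, w} = C" by (rule eq_by_dim[OF Cfin fs.subspace_span sub])
    have "\<forall>x\<in>C. x j = 0"
    proof
      fix x assume "x \<in> C"
      hence "x \<in> fs.span {v, w}" using CE by simp
      hence "x \<in> {fscale a v + fscale b w | a b. True}" by (simp only: span2)
      then obtain a b where "x = fscale a v + fscale b w" by blast
      thus "x j = 0" using vj wj by (simp add: fscale_def)
    qed
    hence "w = 0" using vanish[OF j(2)] w(1) by blast
    thus False using w by simp
  qed
qed

lemma equi: "equidistant n CARD('a) C"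
proof -
  obtain w where w: "w \<in> C" "w \<noteq> 0" "w 0 = 0" by (rule exists_w0)
  have wF: "w \<in> Fvecs n" using w CF by blast
  have "{i. i < n \<and> w i \<noteq> 0} = {1..<n}"
    using w_nonzero[OF w] w(3) by (auto simp: Suc_le_eq) (metis gr0I)
  hence ww: "wt n w = CARD('a)" using n_eq by (simp add: wt_def)
  show ?thesis unfolding equidistant_def
  proof (intro ballI impI)
    fix u assume u: "u \<in> C" "u \<noteq> 0"
    obtain m where "u = (L ^^ m) w" by (rule orbit_mem[of w u]) (use w u in auto)
    thus "wt n u = CARD('a)" using wt_Lp[OF wF] ww by simp
  qed
qed

end

theorem main_thm:
  fixes eta lam :: "'a::{finite,field}"
    and p f n k :: nat
    and C :: "(nat \<Rightarrow> 'a) set"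
  assumes "prime p" and "CARD('a) = p ^ f"
    and "n = CARD('a) + 1"
    and "eta \<noteq> 0" and "lam \<noteq> 0"
    and "odd (mult_ord lam)"
    and "\<exists>e. mult_ord eta = 2 ^ e"
    and "\<forall>x::'a. x \<noteq> 0 \<longrightarrow> (\<exists>a b. x = eta ^ a * lam ^ b)"
    and "linear_code n k C" and "1 \<le> k"
    and "irreducible_code n (matA n eta lam) C"
  shows "(k = 2 \<or> (k = 1 \<and> even CARD('a) \<and> C = module.span fscale {ones n}))
       \<and> (faithful_code n (matA n eta lam) C \<longrightarrow>
            acts_regularly n (cyc_group n (matA n eta lam)) (C - {0})
            \<and> linear_code n 2 C \<and> equidistant n CARD('a) C)"
proof -
  interpret TT eta lam p f n C k
    by unfold_locales (use assms in auto)
  have P1: "k = 2 \<or> (k = 1 \<and> even CARD('a) \<and> C = module.span fscale {ones n})"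
  proof (cases "k = 1")
    case True thus ?thesis using k1_case by blast
  next
    case False thus ?thesis using k_le2 k1 by simp
  qed
  have P2: "acts_regularly n (cyc_group n (matA n eta lam)) (C - {0})
            \<and> linear_code n 2 C \<and> equidistant n CARD('a) C"
    if fa: "faithful_code n (matA n eta lam) C"
  proof -
    interpret TF eta lam p f n C k by unfold_locales (rule fa)
    show ?thesis using regular equi lin k_eq2 by simp
  qed
  show ?thesis using P1 P2 by blast
qed

theorem lemma5p2:
  fixes eta lam :: "'a::{finite,field}"
    and p f n k :: nat
    and C :: "(nat \<Rightarrow> 'a) set"
  assumes "prime p" and "CARD('a) = p ^ f"
    and "n = CARD('a) + 1"
    and "eta \<noteq> 0" and "lam \<noteq> 0"
    and "odd (mult_ord lam)"
    and "\<exists>e. mult_ord eta = 2 ^ e"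
    and "\<forall>x::'a. x \<noteq> 0 \<longrightarrow> (\<exists>a b. x = eta ^ a * lam ^ b)"
    and "linear_code n k C" and "1 \<le> k"
    and "irreducible_code n (matA n eta lam) C"
  shows "(k = 2 \<or> (k = 1 \<and> even CARD('a) \<and> C = module.span fscale {ones n}))
       \<and> (faithful_code n (matA n eta lam) C \<longrightarrow>
            acts_regularly n (cyc_group n (matA n eta lam)) (C - {0})
            \<and> linear_code n 2 C \<and> equidistant n CARD('a) C)"
    using main_thm[OF assms] .

end
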